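(* Let $\mathcal X\subseteq\mathbb R^d$ be an input space, $\mathcal Y=\{1,\dots,C\}$ a finite label set, and $S:\mathcal X\times\mathcal Y\to\mathbb R$ a (non-conformity) score function. Let $(X,Y)\sim\mathcal P_{X,Y}$, and let $\epsilon\sim\mathcal P_\epsilon$ be a perturbation supported on $\mathcal E_r=\{\epsilon:\|\epsilon\|_2\le r\}$, independent of $(X,Y)$; write $Z=(X,Y,\epsilon)$ and $\widetilde X=X+\epsilon$. Fix $\alpha\in(0,1)$ and $s\in[0,\alpha]$, and set $\alpha^*_{\mathrm{aPR}}=1-\frac{1-\alpha}{1-\alpha+s}$. For $\tilde\alpha\in[0,1)$ define the robust quantile $$Q^{\mathrm{rob}}(X,Y;\tilde\alpha)=\min\{t:\ \mathbb P_\epsilon\{S(X+\epsilon,Y)\le t\}\ge 1-\tilde\alpha\},$$ and the threshold $$\tau^{\mathrm{aPR}}(\alpha;s)=\min\{t:\ \mathbb P_{X,Y}\{Q^{\mathrm{rob}}(X,Y;\alpha^*_{\mathrm{aPR}})\le t\}\ge 1-\alpha+s\}.$$ Let $\mathcal C^{\mathrm{aPR}}(\widetilde X)=\{y\in\mathcal Y: S(\widetilde X,y)\le \tau^{\mathrm{aPR}}(\alpha;s)\}$. Then $$\mathbb P_{X,Y,\epsilon}\{Y\in \mathcal C^{\mathrm{aPR}}(X+\epsilon)\}\ge 1-\alpha,$$ i.e. $\mathcal C^{\mathrm{aPR}}$ provides $(1-\alpha)$-probabilistically robust coverage.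
   Context: A prediction set map $\mathcal C$ provides $(1-\alpha)$-probabilistically robust coverage if $\mathbb P_{X,Y,\epsilon}\{Y\in\mathcal C(X+\epsilon)\}\ge 1-\alpha$, where the probability is over the joint distribution of $(X,Y)$ and the independent perturbation $\epsilon$. The quantities $Q^{\mathrm{rob}}$ and $\tau^{\mathrm{aPR}}$ are the (population) quantiles defined in the claim, assumed well-defined (finite). *)

theory Defs
  imports "HOL-Probability.Probability"
begin

definition alpha_star_aPR :: "real \<Rightarrow> real \<Rightarrow> real" where
  "alpha_star_aPR \<alpha> s = 1 - (1 - \<alpha>) / (1 - \<alpha> + s)"

text \<open>Robust quantile Q^rob(x,y; a) = min {t. P_eps{S(x+eps,y) <= t} >= 1 - a}
  (written as Inf; the minimum is attained whenever the set is nonempty).\<close>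
definition Qrob :: "('x::euclidean_space) measure \<Rightarrow> ('x \<Rightarrow> nat \<Rightarrow> real) \<Rightarrow> 'x \<Rightarrow> nat \<Rightarrow> real \<Rightarrow> real" where
  "Qrob Pe S x y a = Inf {t. measure Pe {e \<in> space Pe. S (x + e) y \<le> t} \<ge> 1 - a}"

definition tau_aPR :: "('x::euclidean_space \<times> nat) measure \<Rightarrow> 'x measure \<Rightarrow> ('x \<Rightarrow> nat \<Rightarrow> real)
    \<Rightarrow> real \<Rightarrow> real \<Rightarrow> real" where
  "tau_aPR P Pe S \<alpha> s = Inf {t. measure P {(x, y) \<in> space P. Qrob Pe S x y (alpha_star_aPR \<alpha> s) \<le> t}
                              \<ge> 1 - \<alpha> + s}"

definition C_aPR :: "nat \<Rightarrow> ('x::euclidean_space \<times> nat) measure \<Rightarrow> 'x measure \<Rightarrow> ('x \<Rightarrow> nat \<Rightarrow> real)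
    \<Rightarrow> real \<Rightarrow> real \<Rightarrow> 'x \<Rightarrow> nat set" where
  "C_aPR C P Pe S \<alpha> s xt = {y \<in> {1..C}. S xt y \<le> tau_aPR P Pe S \<alpha> s}"

end

theory Submission
  imports Defs
begin

lemma dec_lim_ge:
  assumes "finite_measure M" "\<And>n. A n \<in> sets M" "decseq A" "\<And>n. c \<le> measure M (A n)"
  shows "c \<le> measure M (\<Inter>n. A n)"
proof -
  have "(\<lambda>n. measure M (A n)) \<longlonglongrightarrow> measure M (\<Inter>i. A i)"
    using finite_measure.finite_Lim_measure_decseq[OF assms(1)] assms(2,3) by blast
  then show ?thesis using assms(4) by (intro LIMSEQ_le_const) auto
qed

lemma dec_lim_lt:
  assumes "finite_measure M" "\<And>n. A n \<in> sets M" "decseq A" "(\<Inter>n. A n) = {}" "0 < c"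
  shows "\<exists>n. measure M (A n) < c"
proof -
  have "(\<lambda>n. measure M (A n)) \<longlonglongrightarrow> measure M (\<Inter>i. A i)"
    using finite_measure.finite_Lim_measure_decseq[OF assms(1)] assms(2,3) by blast
  then have "(\<lambda>n. measure M (A n)) \<longlonglongrightarrow> 0" using assms(4) by simp
  then have "eventually (\<lambda>n. measure M (A n) < c) sequentially"
    using assms(5) by (rule order_tendstoD)
  then obtain N where "\<forall>n\<ge>N. measure M (A n) < c" by (auto simp: eventually_sequentially)
  then show ?thesis by blast
qed

lemma decseq_inv: "decseq (\<lambda>n::nat. t + 1 / real (Suc n))"
  unfolding decseq_def by (auto intro!: divide_left_mono)

lemma inter_inv:
  fixes F :: "real \<Rightarrow> bool"
  assumes "\<And>n. F (t + 1 / real (Suc n))" "\<And>u. t < u \<Longrightarrow> \<exists>n. t + 1 / real (Suc n) \<le> u"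
  shows True
  by simp

lemma exists_inv_below:
  fixes t u :: real assumes "t < u" shows "\<exists>n. t + 1 / real (Suc n) < u"
proof -
  obtain n where "1 / real (Suc n) < u - t" using reals_Archimedean assms
    by (metis diff_gt_0_iff_gt inverse_eq_divide of_nat_Suc)
  then have "t + 1 / real (Suc n) < u" by linarith
  then show ?thesis by blast
qed

lemma neg_nat_below:
  fixes t :: real shows "\<exists>n. - real n < t"
  by (metis reals_Archimedean2 minus_less_iff)

theorem theorem1:
  fixes P :: "((real^'d::finite) \<times> nat) measure"
    and Pe :: "(real^'d) measure"
    and S :: "real^'d \<Rightarrow> nat \<Rightarrow> real"
    and C :: nat and r \<alpha> s :: real
  assumes "prob_space P" and "sets P = sets (borel \<Otimes>\<^sub>M count_space UNIV)"
    and "AE z in P. snd z \<in> {1..C}"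
    and "prob_space Pe" and "sets Pe = sets borel"
    and "AE e in Pe. norm e \<le> r"
    and "(\<lambda>(x, y). S x y) \<in> borel_measurable (borel \<Otimes>\<^sub>M count_space UNIV)"
    and "0 < \<alpha>" and "\<alpha> < 1" and "0 \<le> s" and "s \<le> \<alpha>"
    and "\<And>x y. y \<in> {1..C} \<Longrightarrow>
           {t. measure Pe {e \<in> space Pe. S (x + e) y \<le> t} \<ge> 1 - alpha_star_aPR \<alpha> s} \<noteq> {}"
    and "{t. measure P {(x, y) \<in> space P. Qrob Pe S x y (alpha_star_aPR \<alpha> s) \<le> t} \<ge> 1 - \<alpha> + s} \<noteq> {}"
  shows "measure (P \<Otimes>\<^sub>M Pe) {((x, y), e) \<in> space (P \<Otimes>\<^sub>M Pe). y \<in> C_aPR C P Pe S \<alpha> s (x + e)}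
           \<ge> 1 - \<alpha>"
proof -
  interpret P: prob_space P by fact
  interpret Pe: prob_space Pe by fact
  interpret PP: pair_prob_space P Pe by unfold_locales
  have spP: "space P = UNIV" using sets_eq_imp_space_eq[OF assms(2)] by (simp add: space_pair_measure)
  have spPe: "space Pe = UNIV" using sets_eq_imp_space_eq[OF assms(5)] by simp
  define c where "c = 1 - alpha_star_aPR \<alpha> s"
  have c_eq: "c = (1-\<alpha>)/(1-\<alpha>+s)" using assms(8-11) by (simp add: c_def alpha_star_aPR_def field_simps)
  have c_pos: "0 < c" using assms(8-11) c_eq by simp
  have c_mult: "c * (1-\<alpha>+s) = 1-\<alpha>" using assms(8-11) c_eq by simp
  define F where "F x y t = measure Pe {e\<in>space Pe. S (x+e) y \<le> t}" for x y t
  have Smeas: "(\<lambda>e. S (x+e) y) \<in> borel_measurable Pe" for x y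
  proof -
    have a1: "(\<lambda>e. x+e) \<in> borel_measurable borel" by (intro borel_measurable_add) auto
    have a2: "(\<lambda>e. x+e) \<in> borel_measurable Pe" by (subst measurable_cong_sets[OF assms(5) refl]) (rule a1)
    have "(\<lambda>e. (x+e, y)) \<in> Pe \<rightarrow>\<^sub>M borel \<Otimes>\<^sub>M count_space UNIV"
      using a2 by (intro measurable_Pair) auto
    from measurable_compose[OF this assms(7)] show ?thesis by simp
  qed
  have Fset: "{e\<in>space Pe. S(x+e) y \<le> t} \<in> sets Pe" for x y t
  proof -
    have "(\<lambda>e. S (x+e) y) -` {..t} \<inter> space Pe \<in> sets Pe" using measurable_sets[OF Smeas atMost_borel] .
    moreover have "(\<lambda>e. S (x+e) y) -` {..t} \<inter> space Pe = {e\<in>space Pe. S(x+e) y \<le> t}" by auto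
    ultimately show ?thesis by simp
  qed
  have Fmono: "F x y t \<le> F x y t'" if "t \<le> t'" for x y t t'
    unfolding F_def using that Fset by (intro Pe.finite_measure_mono) auto
  have Fright: "c \<le> F x y t" if H: "\<And>n. c \<le> F x y (t + 1/real(Suc n))" for x y t
  proof -
    have eq: "(\<Inter>n. {e\<in>space Pe. S(x+e) y \<le> t + 1/real(Suc n)}) = {e\<in>space Pe. S(x+e) y \<le> t}"
    proof (intro equalityI subsetI)
      fix e assume "e \<in> (\<Inter>n. {e\<in>space Pe. S(x+e) y \<le> t + 1/real(Suc n)})"
      then have A: "\<And>n. S(x+e) y \<le> t + 1/real(Suc n)" and "e \<in> space Pe" by auto
      have "S(x+e) y \<le> t"
      proof (rule ccontr)
        assume "\<not> S(x+e) y \<le> t"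
        then obtain n where "t + 1/real(Suc n) < S(x+e) y" using exists_inv_below by force
        with A[of n] show False by simp
      qed
      then show "e \<in> {e\<in>space Pe. S(x+e) y \<le> t}" using \<open>e \<in> space Pe\<close> by simp
    next
      fix e assume "e \<in> {e\<in>space Pe. S(x+e) y \<le> t}"
      then show "e \<in> (\<Inter>n. {e\<in>space Pe. S(x+e) y \<le> t + 1/real(Suc n)})"
        by (auto intro: order_trans[of _ t])
    qed
    have "decseq (\<lambda>n. {e\<in>space Pe. S(x+e) y \<le> t + 1/real(Suc n)})"
      using decseq_inv unfolding decseq_def by (auto intro: order_trans)
    from dec_lim_ge[OF Pe.finite_measure_axioms Fset this] H show ?thesis
      unfolding F_def eq by blast
  qed
  have Qatt: "c \<le> F x y t" if y: "y \<in> {1..C}" and q: "Qrob Pe S x y (alpha_star_aPR \<alpha> s) \<le> t" for x y t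
  proof -
    define T where "T = {t. c \<le> F x y t}"
    have QT: "Qrob Pe S x y (alpha_star_aPR \<alpha> s) = Inf T"
      unfolding Qrob_def T_def F_def c_def by simp
    have Tne: "T \<noteq> {}" using assms(12)[OF y] unfolding T_def F_def c_def by simp
    show ?thesis
    proof (rule Fright)
      fix n
      have "0 < 1/real(Suc n)" by simp
      then have "Inf T < t + 1/real(Suc n)" using q QT by linarith
      then obtain t' where "t' \<in> T" "t' < t + 1/real(Suc n)" using cInf_lessD[OF Tne] by blast
      then show "c \<le> F x y (t + 1/real(Suc n))" unfolding T_def using Fmono[of t' "t + 1/real(Suc n)" x y] by simp
    qed
  qed
  have PPs: "sets (P \<Otimes>\<^sub>M Pe) = sets ((borel \<Otimes>\<^sub>M count_space UNIV) \<Otimes>\<^sub>M borel)"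
    using sets_pair_measure_cong[OF assms(2,5)] .
  have spPP: "space (P \<Otimes>\<^sub>M Pe) = UNIV" using spP spPe by (simp add: space_pair_measure)
  have g: "(\<lambda>w::((real^'d)\<times>nat)\<times>(real^'d). (fst (fst w) + snd w, snd (fst w)))
      \<in> (borel \<Otimes>\<^sub>M count_space UNIV) \<Otimes>\<^sub>M borel \<rightarrow>\<^sub>M borel \<Otimes>\<^sub>M count_space UNIV"
    by measurable
  define f where "f w = S (fst (fst w) + snd w) (snd (fst w))" for w
  have fmeas: "f \<in> borel_measurable (P \<Otimes>\<^sub>M Pe)"
  proof -
    have "f \<in> borel_measurable ((borel \<Otimes>\<^sub>M count_space UNIV) \<Otimes>\<^sub>M borel)"
      using measurable_compose[OF g assms(7)] unfolding f_def by simp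
    then show ?thesis by (subst measurable_cong_sets[OF PPs refl])
  qed
  define Q where "Q t = {w \<in> space (P \<Otimes>\<^sub>M Pe). f w \<le> t}" for t
  have Qset: "Q t \<in> sets (P \<Otimes>\<^sub>M Pe)" for t
  proof -
    have "f -` {..t} \<inter> space (P \<Otimes>\<^sub>M Pe) \<in> sets (P \<Otimes>\<^sub>M Pe)" using measurable_sets[OF fmeas atMost_borel] .
    moreover have "f -` {..t} \<inter> space (P \<Otimes>\<^sub>M Pe) = Q t" unfolding Q_def by auto
    ultimately show ?thesis by simp
  qed
  have Qslice: "Pair z -` Q t = {e\<in>space Pe. S (fst z + e) (snd z) \<le> t}" for z t
    unfolding Q_def f_def using spPP spPe by auto
  have Fmeas: "(\<lambda>z. F (fst z) (snd z) t) \<in> borel_measurable P" for t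
  proof -
    have "(\<lambda>z. enn2real (emeasure Pe (Pair z -` Q t))) \<in> borel_measurable P"
      using Pe.measurable_emeasure_Pair[OF Qset] by measurable
    then show ?thesis unfolding Qslice F_def measure_def by simp
  qed
  have sndmeas: "snd \<in> P \<rightarrow>\<^sub>M count_space UNIV"
    by (subst measurable_cong_sets[OF assms(2) refl]) (rule measurable_snd)
  define B where "B t = {z\<in>space P. snd z \<in> {1..C} \<and> c \<le> F (fst z) (snd z) t}" for t
  have Bset: "B t \<in> sets P" for t
  proof -
    have 1: "snd -` {1..C} \<inter> space P \<in> sets P" using measurable_sets[OF sndmeas] by simp
    have 2: "(\<lambda>z. F (fst z) (snd z) t) -` {c..} \<inter> space P \<in> sets P"
      using measurable_sets[OF Fmeas atLeast_borel] .
    have "B t = (snd -` {1..C} \<inter> space P) \<inter> ((\<lambda>z. F (fst z) (snd z) t) -` {c..} \<inter> space P)"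
      unfolding B_def by auto
    then show ?thesis using 1 2 by simp
  qed
  have Bmono: "B t \<subseteq> B t'" if "t \<le> t'" for t t'
  proof
    fix z assume "z \<in> B t"
    then have "z\<in>space P" "snd z\<in>{1..C}" "c \<le> F (fst z) (snd z) t" by (auto simp: B_def)
    moreover have "F (fst z) (snd z) t \<le> F (fst z) (snd z) t'" by (rule Fmono[OF that])
    ultimately show "z \<in> B t'" by (simp add: B_def)
  qed
  obtain N0 where N0a: "{z\<in>space P. \<not> snd z \<in> {1..C}} \<subseteq> N0" "emeasure P N0 = 0" "N0 \<in> sets P"
    by (rule AE_E[OF assms(3)])
  have N0: "{z\<in>space P. \<not> snd z \<in> {1..C}} \<subseteq> N0" "N0 \<in> null_sets P"
    using N0a by (auto intro: null_setsI)
  define G where "G t = measure P {(x, y) \<in> space P. Qrob Pe S x y (alpha_star_aPR \<alpha> s) \<le> t}" for t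
  have GB: "G t \<le> measure P (B t)" for t
  proof -
    let ?A = "{(x, y) \<in> space P. Qrob Pe S x y (alpha_star_aPR \<alpha> s) \<le> t}"
    have sub: "?A \<subseteq> B t \<union> N0"
    proof
      fix z assume z: "z \<in> ?A"
      obtain x y where zxy: "z = (x,y)" by force
      show "z \<in> B t \<union> N0"
      proof (cases "y \<in> {1..C}")
        case True
        have "Qrob Pe S x y (alpha_star_aPR \<alpha> s) \<le> t" "(x,y) \<in> space P" using z unfolding zxy by simp_all
        moreover from this(1) have "c \<le> F x y t" by (rule Qatt[OF True])
        ultimately show ?thesis using True by (simp add: zxy B_def)
      next
        case False
        have "z \<in> space P" using z unfolding zxy by simp
        then have "z \<in> {z\<in>space P. \<not> snd z \<in> {1..C}}" using False zxy by simp
        then show ?thesis using N0(1) by blast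
      qed
    qed
    have "measure P (B t \<union> N0) = measure P (B t)" using measure_Un_null_set[OF Bset N0(2)] .
    moreover have "measure P ?A \<le> measure P (B t \<union> N0)"
    proof (cases "?A \<in> sets P")
      case True
      have "B t \<union> N0 \<in> sets P" using Bset null_setsD2[OF N0(2)] by (rule sets.Un)
      then show ?thesis using sub by (rule P.finite_measure_mono[rotated])
    next
      case False
      then show ?thesis by (simp add: measure_notin_sets)
    qed
    ultimately show ?thesis unfolding G_def by simp
  qed
  have Bright: "d \<le> measure P (B t)" if H: "\<And>n. d \<le> measure P (B (t + 1/real(Suc n)))" for d t
  proof -
    have eq: "(\<Inter>n. B (t + 1/real(Suc n))) = B t"
    proof (intro equalityI subsetI)
      fix z assume "z \<in> (\<Inter>n. B (t + 1/real(Suc n)))"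
      then have "z \<in> space P" "snd z \<in> {1..C}" "\<And>n. c \<le> F (fst z) (snd z) (t + 1/real(Suc n))"
        unfolding B_def by auto
      moreover from this(3) have "c \<le> F (fst z) (snd z) t" by (rule Fright)
      ultimately show "z \<in> B t" unfolding B_def by auto
    next
      fix z assume "z \<in> B t"
      then show "z \<in> (\<Inter>n. B (t + 1/real(Suc n)))"
      proof (intro InterI, clarsimp)
        fix n :: nat assume "z \<in> B t"
        moreover have "B t \<subseteq> B (t + 1/real(Suc n))" by (rule Bmono) simp
        ultimately show "z \<in> B (t + 1 / (1 + real n))" by auto
      qed
    qed
    have "decseq (\<lambda>n. B (t + 1/real(Suc n)))"
      unfolding decseq_def by (intro allI impI Bmono decseq_inv[of t, unfolded decseq_def, rule_format])
    from dec_lim_ge[OF P.finite_measure_axioms Bset this] H show ?thesis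
      unfolding eq by blast
  qed
  define \<tau> where "\<tau> = tau_aPR P Pe S \<alpha> s"
  define TG where "TG = {t. 1 - \<alpha> + s \<le> G t}"
  have tauTG: "\<tau> = Inf TG" unfolding \<tau>_def tau_aPR_def TG_def G_def by simp
  have TGne: "TG \<noteq> {}" using assms(13) unfolding TG_def G_def by simp
  have Btau: "1 - \<alpha> + s \<le> measure P (B \<tau>)"
  proof (rule Bright)
    fix n
    have "0 < 1/real(Suc n)" by simp
    then have "Inf TG < \<tau> + 1/real(Suc n)" using tauTG by linarith
    then obtain t' where t': "t' \<in> TG" "t' < \<tau> + 1/real(Suc n)" using cInf_lessD[OF TGne] by blast
    have "1 - \<alpha> + s \<le> G t'" using t'(1) unfolding TG_def by simp
    also have "\<dots> \<le> measure P (B t')" by (rule GB)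
    also have "\<dots> \<le> measure P (B (\<tau> + 1/real(Suc n)))"
      using Bmono[of t' "\<tau> + 1/real(Suc n)"] t'(2) Bset by (intro P.finite_measure_mono) auto
    finally show "1 - \<alpha> + s \<le> measure P (B (\<tau> + 1/real(Suc n)))" .
  qed
  define E where "E = {((x, y), e) \<in> space (P \<Otimes>\<^sub>M Pe). y \<in> C_aPR C P Pe S \<alpha> s (x + e)}"
  have E_eq: "E = {w \<in> space (P \<Otimes>\<^sub>M Pe). snd (fst w) \<in> {1..C}} \<inter> Q \<tau>"
    unfolding E_def Q_def f_def C_aPR_def \<tau>_def by auto
  have Eset: "E \<in> sets (P \<Otimes>\<^sub>M Pe)"
  proof -
    have "(\<lambda>w. snd (fst w)) \<in> (P \<Otimes>\<^sub>M Pe) \<rightarrow>\<^sub>M count_space UNIV"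
      using measurable_compose[OF measurable_fst sndmeas, of Pe] by simp
    from measurable_sets[OF this, of "{1..C}"]
    have "{w \<in> space (P \<Otimes>\<^sub>M Pe). snd (fst w) \<in> {1..C}} \<in> sets (P \<Otimes>\<^sub>M Pe)"
      by (simp add: vimage_def Int_def conj_commute)
    then show ?thesis unfolding E_eq using Qset by auto
  qed
  have "emeasure (P \<Otimes>\<^sub>M Pe) E = (\<integral>\<^sup>+z. emeasure Pe (Pair z -` E) \<partial>P)"
    using Pe.emeasure_pair_measure_alt[OF Eset] .
  also have "\<dots> \<ge> (\<integral>\<^sup>+z. ennreal c * indicator (B \<tau>) z \<partial>P)"
  proof (intro nn_integral_mono)
    fix z assume "z \<in> space P"
    show "ennreal c * indicator (B \<tau>) z \<le> emeasure Pe (Pair z -` E)"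
    proof (cases "z \<in> B \<tau>")
      case True
      then have z: "snd z \<in> {1..C}" "c \<le> F (fst z) (snd z) \<tau>" unfolding B_def by auto
      have "Pair z -` E = {e\<in>space Pe. S (fst z + e) (snd z) \<le> \<tau>}"
        unfolding E_eq using z(1) Qslice[of z \<tau>] spPP by auto
      then have "emeasure Pe (Pair z -` E) = ennreal (F (fst z) (snd z) \<tau>)"
        unfolding F_def by (simp add: Pe.emeasure_eq_measure)
      then show ?thesis using True z(2) by (simp add: ennreal_leI)
    next
      case False
      then show ?thesis by simp
    qed
  qed
  also have "(\<integral>\<^sup>+z. ennreal c * indicator (B \<tau>) z \<partial>P) = ennreal c * emeasure P (B \<tau>)"
    using nn_integral_cmult_indicator[OF Bset] .
  also have "\<dots> = ennreal (c * measure P (B \<tau>))"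
    using c_pos by (simp add: P.emeasure_eq_measure ennreal_mult)
  finally have "ennreal (c * measure P (B \<tau>)) \<le> ennreal (measure (P \<Otimes>\<^sub>M Pe) E)"
    by (simp add: PP.emeasure_eq_measure)
  then have "c * measure P (B \<tau>) \<le> measure (P \<Otimes>\<^sub>M Pe) E"
    by (simp add: ennreal_le_iff)
  moreover have "1 - \<alpha> \<le> c * measure P (B \<tau>)"
    using mult_left_mono[OF Btau, of c] c_pos c_mult by simp
  ultimately show ?thesis unfolding E_def by linarith
qed

end
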